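(* Let $f_0$ be a probability density on $\mathbb{R}$ with $f_0(-z)=f_0(z)$ for all $z\in\mathbb{R}$ and $f_0$ strictly decreasing on $[0,\infty)$. Let $X$ have density $\frac{1}{\sigma}f_0\big(\frac{x-\mu}{\sigma}\big)$ with $\mu\in\mathbb{R}$, $\sigma>0$ unknown. Given $0<\alpha<1$, let $c>0$ satisfy $\int_0^c f_0(z)\,dz = \alpha/2$ (such $c$ exists). Then $$\inf_{\mu\in\mathbb{R},\,\sigma>0} P_{\mu,\sigma}\Big(\sigma \le \frac{|X|}{c}\Big) = 1-\alpha.$$ *)

theory Defs
  imports "HOL-Probability.Probability"
begin

definition prob_density :: "(real \<Rightarrow> real) \<Rightarrow> bool" where
  "prob_density f \<longleftrightarrow> f \<in> borel_measurable lborel \<and> (\<forall>x. 0 \<le> f x)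
     \<and> (\<integral>\<^sup>+ x. ennreal (f x) \<partial>lborel) = 1"

definition loc_scale :: "(real \<Rightarrow> real) \<Rightarrow> real \<Rightarrow> real \<Rightarrow> real measure" where
  "loc_scale f0 \<mu> \<sigma> = density lborel (\<lambda>x. ennreal (f0 ((x - \<mu>) / \<sigma>) / \<sigma>))"

end

theory Submission imports Defs begin

context
  fixes f0 :: "real \<Rightarrow> real"
  assumes meas[measurable]: "f0 \<in> borel_measurable borel"
    and nonneg: "\<And>x. 0 \<le> f0 x"
    and tot: "(\<integral>\<^sup>+ x. ennreal (f0 x) \<partial>lborel) = 1"
    and sym: "\<And>z. f0 (- z) = f0 z"
    and decr: "\<And>x y. 0 \<le> x \<Longrightarrow> x < y \<Longrightarrow> f0 y < f0 x"
begin

definition F :: "real set \<Rightarrow> ennreal" where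
  "F S = (\<integral>\<^sup>+z. ennreal (f0 z) * indicator S z \<partial>lborel)"

lemma refl_int:
  fixes g :: "real \<Rightarrow> ennreal"
  assumes [measurable]: "g \<in> borel_measurable borel"
  shows "(\<integral>\<^sup>+z. g z \<partial>lborel) = (\<integral>\<^sup>+z. g (a - z) \<partial>lborel)"
  using nn_integral_real_affine[OF assms, of "-1" a] by simp

lemma affine_int:
  fixes g :: "real \<Rightarrow> ennreal"
  assumes [measurable]: "g \<in> borel_measurable borel" and s: "0 < \<sigma>"
  shows "(\<integral>\<^sup>+x. ennreal (f0 ((x - \<mu>) / \<sigma>) / \<sigma>) * g x \<partial>lborel)
       = (\<integral>\<^sup>+z. ennreal (f0 z) * g (\<mu> + \<sigma> * z) \<partial>lborel)"
proof -
  have "(\<integral>\<^sup>+x. ennreal (f0 ((x - \<mu>) / \<sigma>) / \<sigma>) * g x \<partial>lborel)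
      = ennreal \<sigma> * (\<integral>\<^sup>+z. ennreal (f0 z / \<sigma>) * g (\<mu> + \<sigma> * z) \<partial>lborel)"
    using nn_integral_real_affine[of "\<lambda>x. ennreal (f0 ((x - \<mu>) / \<sigma>) / \<sigma>) * g x" \<sigma> \<mu>] s
    by simp
  also have "\<dots> = (\<integral>\<^sup>+z. ennreal \<sigma> * (ennreal (f0 z / \<sigma>) * g (\<mu> + \<sigma> * z)) \<partial>lborel)"
    by (rule nn_integral_cmult[symmetric]) simp
  also have "\<dots> = (\<integral>\<^sup>+z. ennreal (f0 z) * g (\<mu> + \<sigma> * z) \<partial>lborel)"
  proof (rule nn_integral_cong)
    fix z
    have "ennreal \<sigma> * ennreal (f0 z / \<sigma>) = ennreal (f0 z)"
      using s nonneg[of z] by (simp add: ennreal_mult[symmetric])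
    then show "ennreal \<sigma> * (ennreal (f0 z / \<sigma>) * g (\<mu> + \<sigma> * z)) = ennreal (f0 z) * g (\<mu> + \<sigma> * z)"
      by (simp add: mult.assoc[symmetric])
  qed
  finally show ?thesis .
qed

lemma F_le1: "F S \<le> 1"
proof -
  have "F S \<le> (\<integral>\<^sup>+ x. ennreal (f0 x) \<partial>lborel)"
    unfolding F_def by (rule nn_integral_mono) (simp add: indicator_def)
  then show ?thesis using tot by simp
qed

lemma F_fin: "F S \<noteq> \<infinity>"
  using F_le1[of S] by (auto simp: top_unique)

lemma F_add:
  assumes [measurable]: "A \<in> sets borel" "B \<in> sets borel"
    and "\<And>z. indicator A z + (indicator B z :: ennreal) = indicator C z + indicator D z"
    and [measurable]: "C \<in> sets borel" "D \<in> sets borel"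
  shows "F A + F B = F C + F D"
proof -
  have "F A + F B = (\<integral>\<^sup>+z. ennreal (f0 z) * indicator A z + ennreal (f0 z) * indicator B z \<partial>lborel)"
    unfolding F_def by (rule nn_integral_add[symmetric]) auto
  also have "\<dots> = (\<integral>\<^sup>+z. ennreal (f0 z) * indicator C z + ennreal (f0 z) * indicator D z \<partial>lborel)"
    using assms(3) by (simp add: distrib_left[symmetric])
  also have "\<dots> = F C + F D"
    unfolding F_def by (rule nn_integral_add) auto
  finally show ?thesis .
qed

lemma F_AE:
  assumes "AE z in lborel. z \<in> A \<longleftrightarrow> z \<in> B"
  shows "F A = F B"
  unfolding F_def by (rule nn_integral_cong_AE) (use assms in \<open>auto simp: indicator_def\<close>)

lemma F_refl:
  assumes [measurable]: "A \<in> sets borel"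
  shows "F A = F {z. - z \<in> A}"
proof -
  have "F A = (\<integral>\<^sup>+z. ennreal (f0 (0 - z)) * indicator A (0 - z) \<partial>lborel)"
    unfolding F_def by (rule refl_int) simp
  also have "\<dots> = F {z. - z \<in> A}"
    unfolding F_def
    by (rule nn_integral_cong) (auto simp: sym indicator_def)
  finally show ?thesis .
qed

lemma mono_abs: "\<bar>x\<bar> \<le> \<bar>y\<bar> \<Longrightarrow> f0 y \<le> f0 x"
proof -
  assume h: "\<bar>x\<bar> \<le> \<bar>y\<bar>"
  have a: "f0 \<bar>u\<bar> = f0 u" for u by (cases "u \<ge> 0") (auto simp: sym)
  have "f0 \<bar>y\<bar> \<le> f0 \<bar>x\<bar>"
    using h decr[of "\<bar>x\<bar>" "\<bar>y\<bar>"] by (cases "\<bar>x\<bar> = \<bar>y\<bar>") auto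
  then show ?thesis by (simp add: a)
qed


lemma anderson_pos:
  assumes t: "0 \<le> t" and c: "0 < c"
  shows "F {z. \<bar>z + t\<bar> < c} \<le> F {-c<..<c}"
proof -
  have eq: "F {z. \<bar>z + t\<bar> < c} + F {c-t..<c} = F {-c-t<..-c} + F {-c<..<c}"
    by (rule F_add) (use t c in \<open>auto simp: indicator_def\<close>)
  have "F {-c-t<..-c} = F {z. - z \<in> {-c-t<..-c}}" by (rule F_refl) simp
  also have "{z. - z \<in> {-c-t<..-c}} = {c..<c+t}" by auto
  also have "F {c..<c+t} = (\<integral>\<^sup>+z. ennreal (f0 (2*c - z)) * indicator {c..<c+t} (2*c - z) \<partial>lborel)"
    unfolding F_def by (rule refl_int) simp
  also have "\<dots> \<le> F {c-t<..c}"
    unfolding F_def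
  proof (rule nn_integral_mono)
    fix z
    show "ennreal (f0 (2*c - z)) * indicator {c..<c+t} (2*c - z) \<le> ennreal (f0 z) * indicator {c-t<..c} z"
    proof (cases "c - t < z \<and> z \<le> c")
      case True
      then have "f0 (2*c - z) \<le> f0 z" using c by (intro mono_abs) auto
      then show ?thesis using True by (auto simp: indicator_def ennreal_leI)
    next
      case False
      then show ?thesis by (auto simp: indicator_def)
    qed
  qed
  also have "F {c-t<..c} = F {c-t..<c}"
    by (rule F_AE) (use AE_lborel_singleton[of "c-t"] AE_lborel_singleton[of c] in \<open>eventually_elim, auto\<close>)
  finally have "F {-c-t<..-c} \<le> F {c-t..<c}" .
  then have "F {c-t..<c} + F {z. \<bar>z + t\<bar> < c} \<le> F {c-t..<c} + F {-c<..<c}"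
    using eq by (metis add.commute add_right_mono)
  then show ?thesis using F_fin by (simp add: ennreal_add_left_cancel_le)
qed

lemma anderson:
  assumes c: "0 < c"
  shows "F {z. \<bar>z + t\<bar> < c} \<le> F {-c<..<c}"
proof (cases "t \<ge> 0")
  case True then show ?thesis using anderson_pos c by blast
next
  case False
  have "F {z. \<bar>z + t\<bar> < c} = F {z. - z \<in> {z. \<bar>z + t\<bar> < c}}" by (rule F_refl) simp
  also have "{z. - z \<in> {z. \<bar>z + t\<bar> < c}} = {z. \<bar>z + (-t)\<bar> < c}" by auto
  also have "F \<dots> \<le> F {-c<..<c}" using False c by (intro anderson_pos) auto
  finally show ?thesis .
qed

lemma F_B:
  assumes c: "0 < c" and h: "(\<integral>z\<in>{0..c}. f0 z \<partial>lborel) = a"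
  shows "F {-c<..<c} = ennreal (2 * a)"
proof -
  have int: "integrable lborel (\<lambda>x. indicator {0..c} x *\<^sub>R f0 x)"
  proof (rule integrableI_bounded)
    have "(\<integral>\<^sup>+ x. ennreal (norm (indicator {0..c} x *\<^sub>R f0 x)) \<partial>lborel) = F {0..c}"
      unfolding F_def by (rule nn_integral_cong) (auto simp: indicator_def nonneg)
    then show "(\<integral>\<^sup>+ x. ennreal (norm (indicator {0..c} x *\<^sub>R f0 x)) \<partial>lborel) < \<infinity>"
      using F_fin by (simp add: less_top)
  qed simp
  have F0c: "F {0..c} = ennreal a"
  proof -
    have "F {0..c} = (\<integral>\<^sup>+ x. ennreal (indicator {0..c} x *\<^sub>R f0 x) \<partial>lborel)"
      unfolding F_def by (rule nn_integral_cong) (auto simp: indicator_def)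
    also have "\<dots> = ennreal (\<integral>x. indicator {0..c} x *\<^sub>R f0 x \<partial>lborel)"
      by (rule nn_integral_eq_integral[OF int]) (auto simp: nonneg)
    finally show ?thesis using h by (simp add: set_lebesgue_integral_def)
  qed
  have "F {-c<..<c} + F {} = F {-c<..<0} + F {0..<c}"
    by (rule F_add) (use c in \<open>auto simp: indicator_def\<close>)
  moreover have "F {} = 0" unfolding F_def by simp
  moreover have "F {-c<..<0} = F {0..c}"
  proof -
    have "F {-c<..<0} = F {z. - z \<in> {-c<..<0}}" by (rule F_refl) simp
    also have "{z. - z \<in> {-c<..<0}} = {0<..<c}" by auto
    also have "F {0<..<c} = F {0..c}"
      by (rule F_AE) (use AE_lborel_singleton[of 0] AE_lborel_singleton[of c] in \<open>eventually_elim, auto\<close>)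
    finally show ?thesis .
  qed
  moreover have "F {0..<c} = F {0..c}"
    by (rule F_AE) (use AE_lborel_singleton[of c] in \<open>eventually_elim, auto\<close>)
  ultimately have "F {-c<..<c} = ennreal a + ennreal a" using F0c by simp
  moreover have "a \<ge> 0"
    using h[symmetric] by (auto simp: set_lebesgue_integral_def nonneg intro!: integral_nonneg_AE)
  ultimately show ?thesis by (simp add: ennreal_plus[symmetric])
qed

lemma meas_eq:
  assumes s: "0 < \<sigma>" and c: "0 < c"
  shows "measure (loc_scale f0 \<mu> \<sigma>) {x. \<sigma> \<le> \<bar>x\<bar> / c} = enn2real (F {z. c \<le> \<bar>z + \<mu>/\<sigma>\<bar>})"
proof -
  have "emeasure (loc_scale f0 \<mu> \<sigma>) {x. \<sigma> \<le> \<bar>x\<bar> / c}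
     = (\<integral>\<^sup>+x. ennreal (f0 ((x - \<mu>) / \<sigma>) / \<sigma>) * indicator {x. \<sigma> \<le> \<bar>x\<bar> / c} x \<partial>lborel)"
    unfolding loc_scale_def by (rule emeasure_density) auto
  also have "\<dots> = (\<integral>\<^sup>+z. ennreal (f0 z) * indicator {x. \<sigma> \<le> \<bar>x\<bar> / c} (\<mu> + \<sigma> * z) \<partial>lborel)"
    by (rule affine_int[OF _ s]) auto
  also have "\<dots> = F {z. c \<le> \<bar>z + \<mu>/\<sigma>\<bar>}"
    unfolding F_def
  proof (rule nn_integral_cong)
    fix z
    have "\<bar>\<mu> + \<sigma> * z\<bar> = \<sigma> * \<bar>z + \<mu>/\<sigma>\<bar>"
    proof -
      have "\<mu> + \<sigma> * z = \<sigma> * (z + \<mu>/\<sigma>)" using s by (simp add: field_simps)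
      then show ?thesis using s by (simp add: abs_mult)
    qed
    then have "(\<sigma> \<le> \<bar>\<mu> + \<sigma> * z\<bar> / c) \<longleftrightarrow> (c \<le> \<bar>z + \<mu>/\<sigma>\<bar>)"
      using s c by (simp add: le_divide_eq mult.commute)
    then show "ennreal (f0 z) * indicator {x. \<sigma> \<le> \<bar>x\<bar> / c} (\<mu> + \<sigma> * z) = ennreal (f0 z) * indicator {z. c \<le> \<bar>z + \<mu>/\<sigma>\<bar>} z"
      by (simp add: indicator_def)
  qed
  finally show ?thesis by (simp add: measure_def)
qed

lemma compl_sum: "F {z. c \<le> \<bar>z + t\<bar>} + F {z. \<bar>z + t\<bar> < c} = 1"
proof -
  have "F {z. c \<le> \<bar>z + t\<bar>} + F {z. \<bar>z + t\<bar> < c} = F UNIV + F {}"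
    by (rule F_add) (auto simp: indicator_def)
  then show ?thesis using tot by (simp add: F_def)
qed

lemma lower:
  assumes s: "0 < \<sigma>" and c: "0 < c" and h: "(\<integral>z\<in>{0..c}. f0 z \<partial>lborel) = \<alpha> / 2"
  shows "measure (loc_scale f0 \<mu> \<sigma>) {x. \<sigma> \<le> \<bar>x\<bar> / c} \<ge> 1 - \<alpha>"
    and "\<mu> = 0 \<Longrightarrow> measure (loc_scale f0 \<mu> \<sigma>) {x. \<sigma> \<le> \<bar>x\<bar> / c} = 1 - \<alpha>"
proof -
  let ?t = "\<mu>/\<sigma>"
  let ?x = "F {z. c \<le> \<bar>z + ?t\<bar>}" and ?y = "F {z. \<bar>z + ?t\<bar> < c}"
  have B: "F {-c<..<c} = ennreal \<alpha>" using F_B[OF c h] by simp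
  have a0: "0 \<le> \<alpha>"
    using h[symmetric] by (auto simp: set_lebesgue_integral_def nonneg intro!: integral_nonneg_AE)
  have fx: "?x \<noteq> \<infinity>" "?y \<noteq> \<infinity>" using F_fin by auto
  have sum: "enn2real ?x + enn2real ?y = 1"
  proof -
    have "enn2real (?x + ?y) = 1" using compl_sum[of c ?t] by simp
    then show ?thesis using fx enn2real_plus[of ?x ?y] by (simp add: less_top)
  qed
  have "?y \<le> ennreal \<alpha>" using anderson[OF c, of ?t] B by simp
  then have "enn2real ?y \<le> \<alpha>" using a0 enn2real_mono[of ?y "ennreal \<alpha>"] by simp
  then show "measure (loc_scale f0 \<mu> \<sigma>) {x. \<sigma> \<le> \<bar>x\<bar> / c} \<ge> 1 - \<alpha>"
    using sum meas_eq[OF s c, of \<mu>] by simp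
  assume m0: "\<mu> = 0"
  then have "{z. \<bar>z + ?t\<bar> < c} = {-c<..<c}" by auto
  then have "?y = ennreal \<alpha>" using B by simp
  then have "enn2real ?y = \<alpha>" using a0 by simp
  then show "measure (loc_scale f0 \<mu> \<sigma>) {x. \<sigma> \<le> \<bar>x\<bar> / c} = 1 - \<alpha>"
    using sum meas_eq[OF s c, of \<mu>] by simp
qed

end

theorem theorem3p1:
  fixes f0 :: "real \<Rightarrow> real" and \<alpha> c :: real
  assumes dens: "prob_density f0"
    and sym: "\<And>z. f0 (- z) = f0 z"
    and decr: "\<And>x y. 0 \<le> x \<Longrightarrow> x < y \<Longrightarrow> f0 y < f0 x"
    and \<alpha>: "0 < \<alpha>" "\<alpha> < 1"
    and c: "0 < c" "(\<integral>z\<in>{0..c}. f0 z \<partial>lborel) = \<alpha> / 2"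
  shows "(INF p \<in> UNIV \<times> {0<..}.
            measure (loc_scale f0 (fst p) (snd p)) {x. snd p \<le> \<bar>x\<bar> / c}) = 1 - \<alpha>"
proof -
  have m: "f0 \<in> borel_measurable borel" and nn: "\<And>x. 0 \<le> f0 x"
    and t: "(\<integral>\<^sup>+ x. ennreal (f0 x) \<partial>lborel) = 1"
    using dens by (auto simp: prob_density_def)
  have L1: "\<And>\<mu> \<sigma>. 0 < \<sigma> \<Longrightarrow> 1 - \<alpha> \<le> measure (loc_scale f0 \<mu> \<sigma>) {x. \<sigma> \<le> \<bar>x\<bar> / c}"
    using lower(1)[OF m nn t sym decr _ c(1) c(2)] by blast
  have L2: "measure (loc_scale f0 0 1) {x. 1 \<le> \<bar>x\<bar> / c} = 1 - \<alpha>"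
    using lower(2)[OF m nn t sym decr _ c(1) c(2)] by simp
  let ?h = "\<lambda>p. measure (loc_scale f0 (fst p) (snd p)) {x. snd p \<le> \<bar>x\<bar> / c}"
  show ?thesis
    unfolding image_def[symmetric]
  proof (rule cInf_eq_minimum)
    show "1 - \<alpha> \<in> ?h ` (UNIV \<times> {0<..})"
      using L2 by (intro image_eqI[of _ _ "(0,1)"]) auto
    fix x assume "x \<in> ?h ` (UNIV \<times> {0<..})"
    then obtain p where "p \<in> UNIV \<times> {0<..}" "x = ?h p" by blast
    then show "1 - \<alpha> \<le> x" using L1[of "snd p" "fst p"] by auto
  qed
qed

end
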